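(* Let $d\ge 1$ and let $X$ be a mutual-visibility set of $\mathit{BF}(d)$. Then $|X\cap A_c|\le 2$ for every column $c\in\{0,1\}^d$.
   Context: Binary strings $c=c_0\cdots c_{d-1}$ have positions $0,\dots,d-1$ from the left; $c(i)$ is $c$ with bit $i$ complemented. The butterfly $\mathit{BF}(d)$ has vertex set $\{[\ell,c]:\ell\in\{0,\dots,d\},\ c\in\{0,1\}^d\}$ ($\ell$ is the level, $c$ the column); for $\ell\in\{0,\dots,d-1\}$, $[\ell,c]$ is adjacent to $[\ell+1,c']$ iff $c'=c$ or $c'=c(\ell)$, and there are no other edges. $A_c=\{[\ell,c]:\ell\in\{0,\dots,d\}\}$ is the column $c$ and $L_j=\{[j,c]:c\in\{0,1\}^d\}$ is level $j$. For a connected graph $G$ and $X\subseteq V(G)$, two vertices $x,y$ are $X$-visible if some shortest $x,y$-path has no internal vertex in $X$; $X$ is a mutual-visibility set if every two vertices of $X$ are $X$-visible; $\mu(G)$ is the maximum size of a mutual-visibility set. *)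

theory Defs
  imports Main
begin

definition is_walk :: "'a set \<Rightarrow> ('a \<Rightarrow> 'a \<Rightarrow> bool) \<Rightarrow> 'a \<Rightarrow> 'a \<Rightarrow> 'a list \<Rightarrow> bool" where
  "is_walk V E x y p \<longleftrightarrow> p \<noteq> [] \<and> hd p = x \<and> last p = y \<and> set p \<subseteq> V \<and>
     (\<forall>i. Suc i < length p \<longrightarrow> E (p ! i) (p ! Suc i))"

(* a shortest x,y-path: a walk from x to y of minimum length (such walks are automatically paths) *)
definition is_shortest_path :: "'a set \<Rightarrow> ('a \<Rightarrow> 'a \<Rightarrow> bool) \<Rightarrow> 'a \<Rightarrow> 'a \<Rightarrow> 'a list \<Rightarrow> bool" where
  "is_shortest_path V E x y p \<longleftrightarrow> is_walk V E x y p \<and>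
     (\<forall>q. is_walk V E x y q \<longrightarrow> length p \<le> length q)"

definition internal_vertices :: "'a list \<Rightarrow> 'a set" where
  "internal_vertices p = set (butlast (tl p))"

definition visible :: "'a set \<Rightarrow> ('a \<Rightarrow> 'a \<Rightarrow> bool) \<Rightarrow> 'a set \<Rightarrow> 'a \<Rightarrow> 'a \<Rightarrow> bool" where
  "visible V E X x y \<longleftrightarrow> (\<exists>p. is_shortest_path V E x y p \<and> internal_vertices p \<inter> X = {})"

definition mutual_visibility_set :: "'a set \<Rightarrow> ('a \<Rightarrow> 'a \<Rightarrow> bool) \<Rightarrow> 'a set \<Rightarrow> bool" where
  "mutual_visibility_set V E X \<longleftrightarrow> X \<subseteq> V \<and> (\<forall>x\<in>X. \<forall>y\<in>X. visible V E X x y)"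

(* Butterfly BF(d): vertices [l,c] encoded as (l, c) with l \<le> d, c a bool list of length d
   (position i of c is c ! i). *)
definition bf_verts :: "nat \<Rightarrow> (nat \<times> bool list) set" where
  "bf_verts d = {(l, c). l \<le> d \<and> length c = d}"

definition flip_bit :: "bool list \<Rightarrow> nat \<Rightarrow> bool list" where
  "flip_bit c i = c[i := \<not> c ! i]"

definition bf_up :: "nat \<Rightarrow> nat \<times> bool list \<Rightarrow> nat \<times> bool list \<Rightarrow> bool" where
  "bf_up d u v \<longleftrightarrow> u \<in> bf_verts d \<and> v \<in> bf_verts d \<and> fst u < d \<and> fst v = fst u + 1 \<and>
     (snd v = snd u \<or> snd v = flip_bit (snd u) (fst u))"

definition bf_adj :: "nat \<Rightarrow> nat \<times> bool list \<Rightarrow> nat \<times> bool list \<Rightarrow> bool" where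
  "bf_adj d u v \<longleftrightarrow> bf_up d u v \<or> bf_up d v u"

definition bf_column :: "nat \<Rightarrow> bool list \<Rightarrow> (nat \<times> bool list) set" where
  "bf_column d c = {(l, c) | l. l \<le> d}"

end

theory Submission
  imports Defs
begin

lemma bf_step:
  assumes "bf_adj d u v"
  shows "(fst v = Suc (fst u) \<and> (snd v = snd u \<or> snd v = flip_bit (snd u) (fst u))) \<or>
         (fst u = Suc (fst v) \<and> (snd u = snd v \<or> snd u = flip_bit (snd v) (fst v)))"
  using assms unfolding bf_adj_def bf_up_def by auto

lemma walk_up:
  assumes "is_walk V (bf_adj d) x y p" "i < length p"
  shows "fst (p!i) \<le> fst x + i"
  using assms(2)
proof (induction i)
  case 0
  then show ?case using assms(1) unfolding is_walk_def by (metis hd_conv_nth add_0_right order_refl)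
next
  case (Suc i)
  have "bf_adj d (p!i) (p!Suc i)" using assms(1) Suc.prems unfolding is_walk_def by blast
  from bf_step[OF this] Suc show ?case by auto
qed

lemma walk_down:
  assumes "is_walk V (bf_adj d) x y p" "n < length p"
  shows "fst y \<le> fst (p!(length p - 1 - n)) + n"
  using assms(2)
proof (induction n)
  case 0
  then show ?case using assms(1) unfolding is_walk_def by (metis last_conv_nth add_0_right order_refl diff_zero)
next
  case (Suc n)
  define k where "k = length p - 2 - n"
  have k1: "Suc k = length p - 1 - n" "length p - 1 - Suc n = k" using Suc.prems unfolding k_def by auto
  have sk: "Suc k < length p" using Suc.prems unfolding k_def by simp
  have "bf_adj d (p!k) (p!Suc k)" using assms(1) sk unfolding is_walk_def by blast
  from bf_step[OF this] Suc k1 show ?case by auto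
qed

lemma column_unique:
  assumes w: "is_walk (bf_verts d) (bf_adj d) (a,c) (e,c) p"
    and len: "length p = e - a + 1" and ae: "a \<le> e"
  shows "\<forall>i<length p. p!i = (a+i, c)"
proof -
  have lev: "fst (p!i) = a + i" if "i < length p" for i
  proof -
    have "fst (p!i) \<le> a + i" using walk_up[OF w that] by simp
    moreover have "e \<le> fst (p!(length p - 1 - (length p - 1 - i))) + (length p - 1 - i)"
      using walk_down[OF w, of "length p - 1 - i"] that by simp
    ultimately show ?thesis using that len ae by auto
  qed
  have lens: "length (snd (p!i)) = d" if "i < length p" for i
    using w that unfolding is_walk_def bf_verts_def by (auto dest!: nth_mem)
  have stp: "snd (p!Suc i) = snd (p!i) \<or> snd (p!Suc i) = flip_bit (snd (p!i)) (a+i)"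
    if "Suc i < length p" for i
  proof -
    have "bf_adj d (p!i) (p!Suc i)" using w that unfolding is_walk_def by blast
    from bf_step[OF this] lev[of i] lev[of "Suc i"] that show ?thesis by auto
  qed
  have fwd: "\<forall>j. a + i \<le> j \<longrightarrow> snd (p!i) ! j = c ! j" if "i < length p" for i
    using that
  proof (induction i)
    case 0
    then show ?case using w unfolding is_walk_def by (metis hd_conv_nth add_0_right snd_conv)
  next
    case (Suc i)
    show ?case
    proof (intro allI impI)
      fix j assume j: "a + Suc i \<le> j"
      have "snd (p!Suc i) ! j = snd (p!i) ! j"
        using stp[OF Suc.prems] j unfolding flip_bit_def by auto
      then show "snd (p!Suc i) ! j = c ! j" using Suc j by auto
    qed
  qed
  have bwd: "\<forall>j. j < a + (length p - 1 - n) \<longrightarrow> snd (p!(length p - 1 - n)) ! j = c ! j"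
    if "n < length p" for n
    using that
  proof (induction n)
    case 0
    then show ?case using w unfolding is_walk_def by (metis last_conv_nth diff_zero snd_conv)
  next
    case (Suc n)
    define k where "k = length p - 2 - n"
    have k1: "Suc k = length p - 1 - n" "length p - 1 - Suc n = k" using Suc.prems unfolding k_def by auto
    show ?case
    proof (intro allI impI)
      fix j assume j: "j < a + (length p - 1 - Suc n)"
      have sk: "Suc k < length p" using Suc.prems unfolding k_def by simp
      have jk: "j < a + k" using j k1(2) by simp
      have "snd (p!Suc k) ! j = snd (p!k) ! j"
        using stp[OF sk] jk unfolding flip_bit_def by auto
      moreover have "snd (p!Suc k) ! j = c ! j" using Suc.IH Suc.prems jk k1(1) by (metis Suc_lessD add_Suc_right less_SucI)
      ultimately show "snd (p!(length p - 1 - Suc n)) ! j = c ! j" using k1(2) by simp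
    qed
  qed
  show ?thesis
  proof (intro allI impI)
    fix i assume i: "i < length p"
    have lc: "length c = d" using w unfolding is_walk_def bf_verts_def
      by (cases p) (auto)
    have "snd (p!i) = c"
    proof (rule nth_equalityI)
      show "length (snd (p!i)) = length c" using lens[OF i] lc by simp
      fix j assume "j < length (snd (p!i))"
      show "snd (p!i) ! j = c ! j"
      proof (cases "a + i \<le> j")
        case True then show ?thesis using fwd[OF i] by auto
      next
        case False
        have "length p - 1 - (length p - 1 - i) = i" using i by auto
        then show ?thesis using bwd[of "length p - 1 - i"] i False by auto
      qed
    qed
    then show "p!i = (a+i, c)" using lev[OF i] by (metis prod.collapse)
  qed
qed

lemma column_walk:
  assumes "e \<le> d" "length c = d" "a \<le> e"
  shows "is_walk (bf_verts d) (bf_adj d) (a,c) (e,c) (map (\<lambda>l. (l,c)) [a..<Suc e])"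
proof -
  define q where "q = map (\<lambda>l. (l,c)) [a..<Suc e]"
  have lq: "length q = Suc e - a" using assms(3) unfolding q_def by (simp add: Suc_diff_le)
  have nq: "q ! i = (a+i, c)" if "i < length q" for i using that unfolding q_def by (simp del: upt_Suc)
  have ne: "q \<noteq> []" using lq assms by auto
  have "hd q = (a,c)" using nq[of 0] ne by (simp add: hd_conv_nth)
  moreover have "last q = (e,c)" using nq[of "length q - 1"] ne lq assms by (simp add: last_conv_nth)
  moreover have "set q \<subseteq> bf_verts d" unfolding q_def bf_verts_def using assms by auto
  moreover have "bf_adj d (q!i) (q!Suc i)" if "Suc i < length q" for i
    using nq[of i] nq[of "Suc i"] that lq assms unfolding bf_adj_def bf_up_def bf_verts_def by auto
  ultimately show ?thesis using ne unfolding is_walk_def q_def by blast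
qed

lemma not_visible:
  assumes "a < b" "b < e" "e \<le> d" "length c = d" "(b,c) \<in> X"
  shows "\<not> visible (bf_verts d) (bf_adj d) X (a,c) (e,c)"
proof
  assume "visible (bf_verts d) (bf_adj d) X (a,c) (e,c)"
  then obtain p where sp: "is_shortest_path (bf_verts d) (bf_adj d) (a,c) (e,c) p"
    and int: "internal_vertices p \<inter> X = {}" unfolding visible_def by blast
  have w: "is_walk (bf_verts d) (bf_adj d) (a,c) (e,c) p" using sp unfolding is_shortest_path_def by blast
  have "length p \<le> e - a + 1"
    using sp column_walk[of e d c a] assms unfolding is_shortest_path_def by fastforce
  moreover have "e - a + 1 \<le> length p"
  proof -
    have "length p - 1 < length p" using w unfolding is_walk_def by simp
    from walk_up[OF w this] have "fst (p!(length p - 1)) \<le> a + (length p - 1)" by simp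
    moreover have "p!(length p - 1) = (e,c)" using w unfolding is_walk_def by (metis last_conv_nth)
    moreover have "p \<noteq> []" using w unfolding is_walk_def by simp
    ultimately show ?thesis by (cases "length p") auto
  qed
  ultimately have len: "length p = e - a + 1" by simp
  have all: "\<forall>i<length p. p!i = (a+i, c)" using column_unique[OF w len] assms by simp
  have "butlast (tl p) ! (b - a - 1) = p ! (b - a)"
  proof -
    have e1: "Suc (b - Suc a) = b - a" using assms by simp
    show ?thesis using assms len by (simp add: nth_butlast nth_tl e1)
  qed
  moreover have "b - a - 1 < length (butlast (tl p))" using assms len by simp
  ultimately have "p ! (b - a) \<in> internal_vertices p" unfolding internal_vertices_def
    by (metis nth_mem)
  moreover have "p ! (b - a) = (b,c)" using all assms len by simp
  ultimately show False using int assms by auto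
qed

theorem lemma5p1:
  fixes d :: nat and X :: "(nat \<times> bool list) set" and c :: "bool list"
  assumes "d \<ge> 1"
    and "mutual_visibility_set (bf_verts d) (bf_adj d) X"
    and "length c = d"
  shows "card (X \<inter> bf_column d c) \<le> 2"
proof (rule ccontr)
  assume "\<not> ?thesis"
  hence c3: "card (X \<inter> bf_column d c) \<ge> 3" by simp
  define S where "S = fst ` (X \<inter> bf_column d c)"
  have fin: "finite (bf_column d c)"
  proof -
    have "bf_column d c = (\<lambda>l. (l,c)) ` {..d}" unfolding bf_column_def by auto
    then show ?thesis by simp
  qed
  have inj: "inj_on fst (X \<inter> bf_column d c)" unfolding bf_column_def inj_on_def by auto
  have cS: "card S \<ge> 3" unfolding S_def using card_image[OF inj] c3 by simp
  have finS: "finite S" unfolding S_def using fin by simp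
  have memS: "l \<in> S \<Longrightarrow> (l,c) \<in> X \<and> l \<le> d" for l unfolding S_def bf_column_def by auto
  have ne: "S \<noteq> {}" using cS by auto
  define a where "a = Min S"
  define e where "e = Max S"
  have "\<exists>b\<in>S. b \<noteq> a \<and> b \<noteq> e"
  proof (rule ccontr)
    assume "\<not> ?thesis"
    hence "S \<subseteq> {a, e}" by auto
    hence "card S \<le> card {a, e}" by (simp add: card_mono)
    also have "\<dots> \<le> 2" by (simp add: card_insert_le_m1)
    finally show False using cS by simp
  qed
  then obtain b where b: "b \<in> S" "b \<noteq> a" "b \<noteq> e" by blast
  have "a \<le> b" "b \<le> e" using b finS unfolding a_def e_def by auto
  hence ab: "a < b" "b < e" using b by auto
  have aS: "a \<in> S" "e \<in> S" using finS ne unfolding a_def e_def by auto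
  have "visible (bf_verts d) (bf_adj d) X (a,c) (e,c)"
    using assms(2) memS aS unfolding mutual_visibility_set_def by blast
  moreover have "\<not> visible (bf_verts d) (bf_adj d) X (a,c) (e,c)"
    using not_visible[OF ab] memS aS b assms(3) by blast
  ultimately show False by simp
qed

end
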